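(* Let $w\in\mathbb R^m_{++}$ with $\sum_iw_i=1$, $x=x(w)$, $y=y(w)$, $\delta_i=w_i/(y_i\|\Delta b_i\|_1)$, and let $\tilde b_i=b_i^{(0)}+\sum_{l=1}^{N_i}\Delta b_i^l\tilde z_i^l$ with $\tilde z_i^1,\dots,\tilde z_i^{N_i}$ independent, symmetrically distributed random variables in $[-1,1]$. Let $\max(\Delta b_i)$ be the largest entry of $\Delta b_i$. Then $$\Pr\{\langle a_i,x\rangle>\tilde b_i\}\le B\Bigl(N_i,\ \delta_i\frac{\|\Delta b_i\|_1}{\max(\Delta b_i)}\Bigr),$$ where for $N\in\mathbb N$, $p>0$: $B(N,p)=2^{-N}\bigl[(1-\mu)\binom{N}{\lfloor\nu\rfloor}+\sum_{k=\lfloor\nu\rfloor+1}^{N}\binom{N}{k}\bigr]$ with $\nu=(N+p)/2$, $\mu=\nu-\lfloor\nu\rfloor$.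
   Context: $A\in\mathbb R^{m\times n}$ (rows $a_i^\top$) has full column rank $n\le m$, $b^{(0)}\in\mathbb R^m$, and $\{x:Ax\le b^{(0)}\}$ is bounded with nonempty interior. For $w\in\mathbb R^m_{++}$, the weighted center $(x(w),y(w),s(w))$ is the unique solution of $Ax+s=b^{(0)}$, $s>0$, $A^\top y=0$, $\mathrm{Diag}(s)y=w$. $\Delta b_i=(\Delta b_i^1,\dots,\Delta b_i^{N_i})$ is a nonzero vector with nonnegative entries. *)

theory Defs
  imports "HOL-Probability.Probability"
begin

definition polytope :: "real^'n^'m \<Rightarrow> real^'m \<Rightarrow> (real^'n) set" where
  "polytope A b0 = {x. \<forall>i. (A *v x) $ i \<le> b0 $ i}"

definition is_weighted_center ::
  "real^'n^'m \<Rightarrow> real^'m \<Rightarrow> real^'m \<Rightarrow> real^'n \<Rightarrow> real^'m \<Rightarrow> real^'m \<Rightarrow> bool" where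
  "is_weighted_center A b0 w x y s \<longleftrightarrow>
     A *v x + s = b0 \<and> (\<forall>i. s $ i > 0) \<and> transpose A *v y = 0 \<and> (\<forall>i. s $ i * y $ i = w $ i)"

definition Bbound :: "nat \<Rightarrow> real \<Rightarrow> real" where
  "Bbound N p =
     (let \<nu> = (real N + p) / 2; f = nat \<lfloor>\<nu>\<rfloor>; \<mu> = \<nu> - real_of_int \<lfloor>\<nu>\<rfloor>
      in ((1 - \<mu>) * real (N choose f) + (\<Sum>k\<in>{f+1..N}. real (N choose k))) / 2 ^ N)"

end

theory Submission
  imports Defs
begin


definition Gt :: "nat \<Rightarrow> nat \<Rightarrow> real" where
  "Gt N k = (\<Sum>j\<in>{k..N}. real (N choose j)) / 2 ^ N"

definition Lint :: "nat \<Rightarrow> real \<Rightarrow> real" where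
  "Lint N x = (1 - (x - \<lfloor>x\<rfloor>)) * Gt N (nat \<lfloor>x\<rfloor>) + (x - \<lfloor>x\<rfloor>) * Gt N (Suc (nat \<lfloor>x\<rfloor>))"

lemma Gt_step: "Gt N k = real (N choose k) / 2 ^ N + Gt N (Suc k)"
proof (cases "k \<le> N")
  case True
  then show ?thesis unfolding Gt_def
    by (simp add: sum.atLeast_Suc_atMost add_divide_distrib)
next
  case False
  then show ?thesis unfolding Gt_def by (simp add: binomial_eq_0)
qed

lemma Gt_nonneg: "Gt N k \<ge> 0"
  unfolding Gt_def by (intro divide_nonneg_pos sum_nonneg) auto

lemma Gt_mono: "Gt N (Suc k) \<le> Gt N k"
  using Gt_step[of N k] by simp

lemma Gt_0: "Gt N 0 = 1"
proof -
  have "{0..N} = {..N}" by auto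
  then show ?thesis unfolding Gt_def
    using choose_row_sum[of N] by (simp flip: of_nat_sum)
qed

lemma Gt_big: "N < k \<Longrightarrow> Gt N k = 0"
  unfolding Gt_def by simp

lemma Gt_pascal: "Gt (Suc M) (Suc k) = (Gt M k + Gt M (Suc k)) / 2"
proof -
  have A: "(\<Sum>j\<in>{Suc k..Suc M}. real (Suc M choose j)) = (\<Sum>j\<in>{k..M}. real (Suc M choose Suc j))"
    by (rule sum.shift_bounds_cl_Suc_ivl)
  also have "\<dots> = (\<Sum>j\<in>{k..M}. real (M choose j)) + (\<Sum>j\<in>{k..M}. real (M choose Suc j))"
    by (simp add: sum.distrib)
  also have "(\<Sum>j\<in>{k..M}. real (M choose Suc j)) = (\<Sum>j\<in>{Suc k..M}. real (M choose j))"
  proof (cases "k \<le> M")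
    case True
    have "(\<Sum>j\<in>{k..M}. real (M choose Suc j)) = (\<Sum>j\<in>{Suc k..Suc M}. real (M choose j))"
      by (rule sum.shift_bounds_cl_Suc_ivl[symmetric])
    also have "\<dots> = (\<Sum>j\<in>{Suc k..M}. real (M choose j)) + real (M choose Suc M)"
      using True by (simp add: sum.cl_ivl_Suc)
    finally show ?thesis by simp
  qed simp
  finally show ?thesis unfolding Gt_def by (simp add: field_simps)
qed

lemma Bbound_Lint:
  assumes "0 \<le> (real N + p) / 2"
  shows "Bbound N p = Lint N ((real N + p) / 2)"
proof -
  define \<nu> where "\<nu> = (real N + p) / 2"
  define f where "f = nat \<lfloor>\<nu>\<rfloor>"
  define \<mu> where "\<mu> = \<nu> - real_of_int \<lfloor>\<nu>\<rfloor>"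
  have S: "(\<Sum>k\<in>{f+1..N}. real (N choose k)) = Gt N (Suc f) * 2^N"
    unfolding Gt_def by simp
  have C: "real (N choose f) = (Gt N f - Gt N (Suc f)) * 2^N"
    using Gt_step[of N f] by (simp add: field_simps)
  have "Bbound N p = ((1 - \<mu>) * real (N choose f) + (\<Sum>k\<in>{f+1..N}. real (N choose k))) / 2 ^ N"
    unfolding Bbound_def Let_def \<nu>_def f_def \<mu>_def by simp
  also have "\<dots> = (1 - \<mu>) * Gt N f + \<mu> * Gt N (Suc f)"
    unfolding S C by (simp add: field_simps)
  also have "\<dots> = Lint N \<nu>"
    unfolding Lint_def \<mu>_def f_def by simp
  finally show ?thesis unfolding \<nu>_def .
qed

lemma Bbound_nonneg: "Bbound N p \<ge> 0"
proof -
  define \<nu> where "\<nu> = (real N + p) / 2"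
  have "\<nu> - real_of_int \<lfloor>\<nu>\<rfloor> < 1" by linarith
  then show ?thesis unfolding Bbound_def Let_def \<nu>_def[symmetric]
    by (intro divide_nonneg_pos add_nonneg_nonneg mult_nonneg_nonneg sum_nonneg) auto
qed

lemma Lint_pascal:
  assumes "1 \<le> x"
  shows "Lint (Suc M) x = (Lint M (x - 1) + Lint M x) / 2"
proof -
  have "1 \<le> \<lfloor>x\<rfloor>" using assms by linarith
  then have "0 < nat \<lfloor>x\<rfloor>" by simp
  then obtain k where k: "nat \<lfloor>x\<rfloor> = Suc k"
    using gr0_implies_Suc by blast
  have f1: "\<lfloor>x - 1\<rfloor> = \<lfloor>x\<rfloor> - 1" by linarith
  have k2: "nat (\<lfloor>x\<rfloor> - 1) = k" using k by linarith
  have fr: "x - 1 - real_of_int \<lfloor>x - 1\<rfloor> = x - real_of_int \<lfloor>x\<rfloor>" using f1 by simp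
  show ?thesis
    unfolding Lint_def fr unfolding f1 k k2 Gt_pascal by (simp add: field_simps)
qed

lemma Lint_two_piece:
  assumes "real k \<le> x" "x < real k + 2"
  shows "Lint M x = Gt M k - (real (M choose k) / 2^M) * (x - k)
     + (real (M choose k) / 2^M - real (M choose Suc k) / 2^M) * max (x - k - 1) 0"
proof (cases "x < real k + 1")
  case True
  then have "\<lfloor>x\<rfloor> = int k" using assms by linarith
  then show ?thesis using True Gt_step[of M k] unfolding Lint_def
    by (simp add: max_def field_simps)
next
  case False
  then have "\<lfloor>x\<rfloor> = int k + 1" using assms by linarith
  then have n: "nat \<lfloor>x\<rfloor> = Suc k" by simp
  have fr: "x - real_of_int \<lfloor>x\<rfloor> = x - k - 1" using \<open>\<lfloor>x\<rfloor> = int k + 1\<close> by simp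
  have mx: "max (x - k - 1) 0 = x - k - 1" using False by simp
  have L: "Lint M x = (1 - (x - k - 1)) * Gt M (Suc k) + (x - k - 1) * Gt M (Suc (Suc k))"
    unfolding Lint_def n fr by simp
  define a where "a = real (M choose k) / 2^M"
  define b where "b = real (M choose Suc k) / 2^M"
  have g1: "Gt M k = a + Gt M (Suc k)" unfolding a_def by (rule Gt_step)
  have g2: "Gt M (Suc (Suc k)) = Gt M (Suc k) - b" using Gt_step[of M "Suc k"] unfolding b_def by simp
  show ?thesis unfolding mx a_def[symmetric] b_def[symmetric] L g1 g2
    by (simp add: algebra_simps)
qed

lemma max_spread:
  fixes u d :: real
  assumes "0 \<le> d" "d \<le> 1/2"
  shows "max (u - d) 0 + max (u + d) 0 \<le> max (u - 1/2) 0 + max (u + 1/2) 0"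
  using assms by (auto simp: max_def)

lemma Lint_spread:
  assumes "real M / 2 \<le> v - 1/2" "0 \<le> d" "d \<le> 1/2"
  shows "Lint M (v - d) + Lint M (v + d) \<le> Lint M (v - 1/2) + Lint M (v + 1/2)"
proof -
  define k where "k = nat \<lfloor>v - 1/2\<rfloor>"
  have v0: "0 \<le> v - 1/2" using assms(1) by (smt (verit) divide_nonneg_pos of_nat_0_le_iff)
  have kv: "real k \<le> v - 1/2" "v - 1/2 < real k + 1" unfolding k_def using v0 by linarith+
  define a where "a = real (M choose k) / 2^M"
  define b where "b = real (M choose Suc k) / 2^M"
  have ab: "b \<le> a"
  proof (cases "Suc k \<le> M")
    case True
    have "M div 2 \<le> k" using kv assms(1) by linarith
    then have "M choose Suc k \<le> M choose k" using True by (intro binomial_antimono) auto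
    then show ?thesis unfolding a_def b_def by (simp add: divide_right_mono)
  next
    case False
    then show ?thesis unfolding a_def b_def by (simp add: binomial_eq_0)
  qed
  have P: "\<And>x. real k \<le> x \<Longrightarrow> x < real k + 2 \<Longrightarrow> Lint M x = Gt M k - a * (x - k) + (a - b) * max (x - k - 1) 0"
    unfolding a_def b_def by (rule Lint_two_piece)
  have "(a - b) * (max (v - d - k - 1) 0 + max (v + d - k - 1) 0)
     \<le> (a - b) * (max (v - 1/2 - k - 1) 0 + max (v + 1/2 - k - 1) 0)"
    using ab max_spread[OF assms(2,3), of "v - k - 1"]
    by (intro mult_left_mono) (auto simp: algebra_simps)
  then show ?thesis
    using kv assms(2,3) by (simp add: P algebra_simps)
qed

lemma Bbound_spread:
  assumes "1 \<le> p" "0 \<le> c" "c \<le> 1"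
  shows "Bbound M (p - c) + Bbound M (p + c) \<le> Bbound M (p - 1) + Bbound M (p + 1)"
proof -
  define v where "v = (real M + p) / 2"
  have e: "\<And>q. (real M + (p + q)) / 2 = v + q / 2" "\<And>q. (real M + (p - q)) / 2 = v - q / 2"
    unfolding v_def by (auto simp: field_simps)
  have h: "real M / 2 \<le> v - 1/2" unfolding v_def using assms by (simp add: field_simps)
  have nn: "\<And>q. 0 \<le> q \<Longrightarrow> q \<le> 1 \<Longrightarrow> 0 \<le> (real M + (p - q)) / 2" using assms by simp
  have nn2: "\<And>q. 0 \<le> q \<Longrightarrow> 0 \<le> (real M + (p + q)) / 2" using assms by simp
  show ?thesis
    using Lint_spread[OF h, of "c/2"] assms
    by (simp add: Bbound_Lint[OF nn] Bbound_Lint[OF nn2] e)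
qed

lemma Bbound_pascal:
  assumes "1 \<le> p"
  shows "Bbound (Suc M) p = (Bbound M (p - 1) + Bbound M (p + 1)) / 2"
proof -
  define x where "x = (real (Suc M) + p) / 2"
  have e1: "(real M + (p - 1)) / 2 = x - 1" unfolding x_def by (simp add: field_simps)
  have e2: "(real M + (p + 1)) / 2 = x" unfolding x_def by (simp add: field_simps)
  have x: "1 \<le> x" using assms unfolding x_def by simp
  have "Bbound (Suc M) p = Lint (Suc M) x" unfolding x_def using assms by (intro Bbound_Lint) simp
  moreover have "Bbound M (p - 1) = Lint M (x - 1)" unfolding e1[symmetric] using assms by (intro Bbound_Lint) simp
  moreover have "Bbound M (p + 1) = Lint M x" unfolding e2[symmetric] using assms by (intro Bbound_Lint) simp
  ultimately show ?thesis using Lint_pascal[OF x, of M] by simp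
qed

lemma Gt_sym:
  assumes "k \<le> Suc N"
  shows "Gt N k + Gt N (Suc N - k) = 1"
proof -
  have R: "(\<Sum>j\<in>{Suc N - k..N}. real (N choose j)) = (\<Sum>j\<in>{0..<k}. real (N choose j))"
    by (rule sum.reindex_bij_witness[where i="\<lambda>j. N - j" and j="\<lambda>j. N - j"])
       (use assms in \<open>auto simp: binomial_symmetric[symmetric]\<close>)
  have U: "(\<Sum>j\<in>{0..<k}. real (N choose j)) + (\<Sum>j\<in>{k..N}. real (N choose j)) = (\<Sum>j\<in>{0..N}. real (N choose j))"
  proof -
    have "{0..N} = {0..<k} \<union> {k..N}" using assms by auto
    then show ?thesis by (simp add: sum.union_disjoint[symmetric] ivl_disj_int)
  qed
  have "(\<Sum>j\<in>{0..N}. real (N choose j)) = 2 ^ N"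
    using Gt_0[of N] unfolding Gt_def by simp
  then show ?thesis unfolding Gt_def using R U by (simp add: add_divide_distrib[symmetric])
qed

lemma Bbound_half:
  assumes "1 \<le> N" "0 < p" "p \<le> 1"
  shows "1/2 \<le> Bbound N p"
proof -
  define v where "v = (real N + p) / 2"
  have B: "Bbound N p = Lint N v" unfolding v_def using assms by (intro Bbound_Lint) simp
  show ?thesis
  proof (cases "even N")
    case True
    then obtain r where r: "N = 2 * r" by blast
    have fl: "\<lfloor>v\<rfloor> = int r" unfolding floor_eq_iff v_def r using assms by simp
    have s: "Gt N r + Gt N (Suc r) = 1" using Gt_sym[of r N] r by (simp add: Suc_diff_le)
    have m: "Gt N (Suc r) \<le> Gt N r" by (rule Gt_mono)
    have mu: "v - r \<le> 1/2" "0 \<le> v - r" unfolding v_def r using assms by (simp_all add: field_simps)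
    have "Lint N v = (1 - (v - r)) * Gt N r + (v - r) * Gt N (Suc r)"
      unfolding Lint_def fl by simp
    also have "\<dots> = 1/2 + (1/2 - (v - r)) * (Gt N r - Gt N (Suc r))"
      using s by (simp add: algebra_simps)
    also have "\<dots> \<ge> 1/2" using mu m by (simp add: mult_nonneg_nonneg)
    finally show ?thesis using B by simp
  next
    case False
    then obtain r where r: "N = 2 * r + 1" using oddE by blast
    have s: "Gt N (Suc r) = 1/2" using Gt_sym[of "Suc r" N] r by simp
    show ?thesis
    proof (cases "v < real r + 1")
      case True
      have fl: "\<lfloor>v\<rfloor> = int r" unfolding floor_eq_iff using True unfolding v_def r using assms by simp
      have m: "Gt N (Suc r) \<le> Gt N r" by (rule Gt_mono)
      have mu: "v - r \<le> 1" "0 \<le> v - r" using True unfolding v_def r using assms by (simp_all add: field_simps)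
      have "Lint N v = (1 - (v - r)) * Gt N r + (v - r) * Gt N (Suc r)"
        unfolding Lint_def fl by simp
      also have "\<dots> = Gt N (Suc r) + (1 - (v - r)) * (Gt N r - Gt N (Suc r))"
        by (simp add: algebra_simps)
      also have "\<dots> \<ge> 1/2" using mu m s by (simp add: mult_nonneg_nonneg)
      finally show ?thesis using B by simp
    next
      case False
      then have "v = real r + 1" unfolding v_def r using assms by simp
      then show ?thesis using B s unfolding Lint_def by (simp add: nat_add_distrib)
    qed
  qed
qed



context prob_space begin

lemma indep_pair_emeasure:
  fixes Y S :: "'a \<Rightarrow> real" and \<phi> :: "real \<times> real \<Rightarrow> bool"
  assumes ind: "indep_var borel Y borel S"
    and P: "{p \<in> space (borel \<Otimes>\<^sub>M borel). \<phi> p} \<in> sets (borel \<Otimes>\<^sub>M borel)"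
  shows "emeasure M {\<omega>\<in>space M. \<phi> (Y \<omega>, S \<omega>)} = (\<integral>\<^sup>+\<omega>. emeasure M {\<omega>'\<in>space M. \<phi> (Y \<omega>, S \<omega>')} \<partial>M)"
proof -
  define A where "A = {p \<in> space (borel \<Otimes>\<^sub>M borel). \<phi> p}"
  have A: "A \<in> sets (borel \<Otimes>\<^sub>M borel)" using P A_def by simp
  from ind[unfolded indep_var_distribution_eq]
  have rvY: "Y \<in> borel_measurable M" and rvS: "S \<in> borel_measurable M"
    and eq: "distr M borel Y \<Otimes>\<^sub>M distr M borel S = distr M (borel \<Otimes>\<^sub>M borel) (\<lambda>x. (Y x, S x))"
    by auto
  have A': "A \<in> sets (distr M borel Y \<Otimes>\<^sub>M distr M borel S)"
    using A by (simp cong: sets_pair_measure_cong)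
  interpret S: sigma_finite_measure "distr M borel S"
    by (intro prob_space_imp_sigma_finite prob_space_distr rvS)
  have m: "(\<lambda>x. (Y x, S x)) \<in> measurable M (borel \<Otimes>\<^sub>M borel)"
    using rvY rvS by measurable
  have "emeasure M {\<omega>\<in>space M. \<phi> (Y \<omega>, S \<omega>)} = emeasure (distr M (borel \<Otimes>\<^sub>M borel) (\<lambda>x. (Y x, S x))) A"
    by (subst emeasure_distr[OF m A]) (auto simp: A_def space_pair_measure intro!: arg_cong[where f="emeasure M"])
  also have "\<dots> = emeasure (distr M borel Y \<Otimes>\<^sub>M distr M borel S) A" by (simp add: eq)
  also have "\<dots> = (\<integral>\<^sup>+y. emeasure (distr M borel S) (Pair y -` A) \<partial>distr M borel Y)"
    using S.emeasure_pair_measure_alt[OF A'] by simp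
  also have "\<dots> = (\<integral>\<^sup>+\<omega>. emeasure (distr M borel S) (Pair (Y \<omega>) -` A) \<partial>M)"
    using S.measurable_emeasure_Pair[OF A'] rvY by (subst nn_integral_distr) auto
  also have "\<dots> = (\<integral>\<^sup>+\<omega>. emeasure M {\<omega>'\<in>space M. \<phi> (Y \<omega>, S \<omega>')} \<partial>M)"
  proof (intro nn_integral_cong)
    fix \<omega> assume "\<omega> \<in> space M"
    have "Pair (Y \<omega>) -` A \<in> sets borel"
      using A by (metis sets_Pair1)
    then show "emeasure (distr M borel S) (Pair (Y \<omega>) -` A) = emeasure M {\<omega>'\<in>space M. \<phi> (Y \<omega>, S \<omega>')}"
      by (subst emeasure_distr[OF rvS]) (auto simp: A_def space_pair_measure intro!: arg_cong[where f="emeasure M"])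
  qed
  finally show ?thesis .
qed

lemma sym_tail:
  fixes X :: "'i \<Rightarrow> 'a \<Rightarrow> real"
  assumes "finite I" "indep_vars (\<lambda>_. borel) X I"
    "\<And>l. l \<in> I \<Longrightarrow> distr M borel (X l) = distr M borel (\<lambda>\<omega>. - X l \<omega>)"
    "\<And>l \<omega>. l \<in> I \<Longrightarrow> \<omega> \<in> space M \<Longrightarrow> \<bar>X l \<omega>\<bar> \<le> 1"
  shows "(\<forall>s. prob {\<omega>\<in>space M. s \<le> (\<Sum>l\<in>I. X l \<omega>)} = prob {\<omega>\<in>space M. (\<Sum>l\<in>I. X l \<omega>) \<le> -s})
       \<and> (\<forall>t>0. prob {\<omega>\<in>space M. t \<le> (\<Sum>l\<in>I. X l \<omega>)} \<le> Bbound (card I) t)"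
  using assms(1-4)
proof (induction I rule: finite_induct)
  case empty
  show ?case using Bbound_nonneg by (auto simp: not_le)
next
  case (insert i I)
  have indI: "indep_vars (\<lambda>_. borel) X I"
    using insert.prems(1) by (rule indep_vars_subset) auto
  have IH: "\<forall>s. prob {\<omega>\<in>space M. s \<le> (\<Sum>l\<in>I. X l \<omega>)} = prob {\<omega>\<in>space M. (\<Sum>l\<in>I. X l \<omega>) \<le> -s}"
    "\<forall>t>0. prob {\<omega>\<in>space M. t \<le> (\<Sum>l\<in>I. X l \<omega>)} \<le> Bbound (card I) t"
    using insert.IH[OF indI] insert.prems(2,3) by auto
  define S where "S = (\<lambda>\<omega>. \<Sum>l\<in>I. X l \<omega>)"
  define Y where "Y = X i"
  have ind: "indep_var borel Y borel S"
    unfolding Y_def S_def by (rule indep_vars_sum[OF insert.hyps insert.prems(1)])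
  have rvY: "Y \<in> borel_measurable M" using ind by (rule indep_var_rv1)
  have rvS: "S \<in> borel_measurable M" using ind by (rule indep_var_rv2)
  have sumeq: "\<And>\<omega>. (\<Sum>l\<in>insert i I. X l \<omega>) = Y \<omega> + S \<omega>"
    unfolding Y_def S_def using insert.hyps by simp
  have Ybd: "\<And>\<omega>. \<omega> \<in> space M \<Longrightarrow> \<bar>Y \<omega>\<bar> \<le> 1" unfolding Y_def using insert.prems(3) by auto
  have Ysym: "distr M borel Y = distr M borel (\<lambda>\<omega>. - Y \<omega>)" unfolding Y_def using insert.prems(2) by auto
  define F where "F = (\<lambda>u. prob {\<omega>\<in>space M. u \<le> S \<omega>})"
  have Fanti: "F u' \<le> F u" if "u \<le> u'" for u u'
    unfolding F_def using that rvS by (intro finite_measure_mono) auto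
  have Fmeas: "(\<lambda>y. F (s - y)) \<in> borel_measurable borel" for s
    by (rule borel_measurable_mono) (auto simp: mono_def intro!: Fanti)
  have Fmeas2: "(\<lambda>y. F (s + y)) \<in> borel_measurable borel" for s
  proof -
    have "(\<lambda>y. F (s - y)) \<circ> uminus \<in> borel_measurable borel"
      using Fmeas[of s] by (intro measurable_comp[OF borel_measurable_uminus[OF measurable_ident_sets[OF refl]]]) auto
    then show ?thesis by (simp add: comp_def)
  qed
  have Fsym: "F u = prob {\<omega>\<in>space M. S \<omega> \<le> -u}" for u
    using IH(1) unfolding F_def S_def by auto
  have Ysym_int: "(\<integral>\<^sup>+\<omega>. g (Y \<omega>) \<partial>M) = (\<integral>\<^sup>+\<omega>. g (- Y \<omega>) \<partial>M)"
    if g: "g \<in> borel_measurable borel" for g :: "real \<Rightarrow> ennreal"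
  proof -
    have "(\<integral>\<^sup>+\<omega>. g (Y \<omega>) \<partial>M) = (\<integral>\<^sup>+y. g y \<partial>distr M borel Y)"
      using g rvY by (subst nn_integral_distr) auto
    also have "\<dots> = (\<integral>\<^sup>+y. g y \<partial>distr M borel (\<lambda>\<omega>. - Y \<omega>))" by (simp add: Ysym)
    also have "\<dots> = (\<integral>\<^sup>+\<omega>. g (- Y \<omega>) \<partial>M)"
      using g rvY by (subst nn_integral_distr) auto
    finally show ?thesis .
  qed
  have E1: "emeasure M {\<omega>\<in>space M. s \<le> Y \<omega> + S \<omega>} = (\<integral>\<^sup>+\<omega>. ennreal (F (s - Y \<omega>)) \<partial>M)" for s
  proof -
    have "emeasure M {\<omega>\<in>space M. (\<lambda>p. s \<le> fst p + snd p) (Y \<omega>, S \<omega>)}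
        = (\<integral>\<^sup>+\<omega>. emeasure M {\<omega>'\<in>space M. (\<lambda>p. s \<le> fst p + snd p) (Y \<omega>, S \<omega>')} \<partial>M)"
      by (rule indep_pair_emeasure[OF ind]) measurable
    also have "\<dots> = (\<integral>\<^sup>+\<omega>. ennreal (F (s - Y \<omega>)) \<partial>M)"
      unfolding F_def by (intro nn_integral_cong) (auto simp: emeasure_eq_measure algebra_simps intro!: arg_cong[where f="\<lambda>A. ennreal (prob A)"])
    finally show ?thesis by simp
  qed
  have E2: "emeasure M {\<omega>\<in>space M. Y \<omega> + S \<omega> \<le> -s} = (\<integral>\<^sup>+\<omega>. ennreal (F (s + Y \<omega>)) \<partial>M)" for s
  proof -
    have "emeasure M {\<omega>\<in>space M. (\<lambda>p. fst p + snd p \<le> -s) (Y \<omega>, S \<omega>)}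
        = (\<integral>\<^sup>+\<omega>. emeasure M {\<omega>'\<in>space M. (\<lambda>p. fst p + snd p \<le> -s) (Y \<omega>, S \<omega>')} \<partial>M)"
      by (rule indep_pair_emeasure[OF ind]) measurable
    also have "\<dots> = (\<integral>\<^sup>+\<omega>. ennreal (F (s + Y \<omega>)) \<partial>M)"
      unfolding Fsym by (intro nn_integral_cong) (auto simp: emeasure_eq_measure algebra_simps intro!: arg_cong[where f="\<lambda>A. ennreal (prob A)"])
    finally show ?thesis by simp
  qed
  have E3: "(\<integral>\<^sup>+\<omega>. ennreal (F (s + Y \<omega>)) \<partial>M) = (\<integral>\<^sup>+\<omega>. ennreal (F (s - Y \<omega>)) \<partial>M)" for s
    using Ysym_int[of "\<lambda>y. ennreal (F (s + y))"] Fmeas2[of s] by simp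
  have SYM: "prob {\<omega>\<in>space M. s \<le> Y \<omega> + S \<omega>} = prob {\<omega>\<in>space M. Y \<omega> + S \<omega> \<le> -s}" for s
  proof -
    have "emeasure M {\<omega>\<in>space M. s \<le> Y \<omega> + S \<omega>} = emeasure M {\<omega>\<in>space M. Y \<omega> + S \<omega> \<le> -s}"
      using E1 E2 E3 by simp
    then show ?thesis by (simp add: emeasure_eq_measure)
  qed
  have BND: "prob {\<omega>\<in>space M. t \<le> Y \<omega> + S \<omega>} \<le> Bbound (Suc (card I)) t" if t: "t > 0" for t
  proof (cases "t \<le> 1")
    case True
    let ?A = "{\<omega>\<in>space M. t \<le> Y \<omega> + S \<omega>}" and ?B = "{\<omega>\<in>space M. Y \<omega> + S \<omega> \<le> -t}"
    have sets: "?A \<in> events" "?B \<in> events" using rvY rvS by measurable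
    have "prob ?A + prob ?B = prob (?A \<union> ?B)"
      using t sets by (intro finite_measure_Union[symmetric]) auto
    also have "\<dots> \<le> 1" by simp
    finally have "prob ?A \<le> 1/2" using SYM[of t] by simp
    also have "\<dots> \<le> Bbound (Suc (card I)) t" using t True by (intro Bbound_half) auto
    finally show ?thesis .
  next
    case False
    let ?A = "{\<omega>\<in>space M. t \<le> Y \<omega> + S \<omega>}"
    have pw: "F (t - Y \<omega>) + F (t + Y \<omega>) \<le> 2 * Bbound (Suc (card I)) t" if \<omega>: "\<omega> \<in> space M" for \<omega>
    proof -
      define c where "c = \<bar>Y \<omega>\<bar>"
      have c: "0 \<le> c" "c \<le> 1" using Ybd[OF \<omega>] c_def by auto
      have "F (t - Y \<omega>) + F (t + Y \<omega>) = F (t - c) + F (t + c)"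
        unfolding c_def by (cases "Y \<omega> \<ge> 0") auto
      also have "\<dots> \<le> Bbound (card I) (t - c) + Bbound (card I) (t + c)"
        using IH(2) c False unfolding F_def S_def by (intro add_mono) auto
      also have "\<dots> \<le> Bbound (card I) (t - 1) + Bbound (card I) (t + 1)"
        using False c by (intro Bbound_spread) auto
      also have "\<dots> = 2 * Bbound (Suc (card I)) t"
        using False by (simp add: Bbound_pascal)
      finally show ?thesis .
    qed
    have "ennreal (prob ?A + prob ?A) = emeasure M ?A + emeasure M ?A"
      by (subst ennreal_plus) (auto simp: emeasure_eq_measure)
    also have "\<dots> = (\<integral>\<^sup>+\<omega>. ennreal (F (t - Y \<omega>)) \<partial>M) + (\<integral>\<^sup>+\<omega>. ennreal (F (t + Y \<omega>)) \<partial>M)"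
      using E1[of t] E1[of t] E3[of t] by simp
    also have "\<dots> = (\<integral>\<^sup>+\<omega>. ennreal (F (t - Y \<omega>)) + ennreal (F (t + Y \<omega>)) \<partial>M)"
    proof -
      have m1[measurable]: "(\<lambda>\<omega>. F (t - Y \<omega>)) \<in> borel_measurable M"
        using measurable_compose[OF rvY Fmeas[of t]] by simp
      have m2[measurable]: "(\<lambda>\<omega>. F (t + Y \<omega>)) \<in> borel_measurable M"
        using measurable_compose[OF rvY Fmeas2[of t]] by simp
      show ?thesis by (intro nn_integral_add[symmetric]) measurable
    qed
    also have "\<dots> \<le> (\<integral>\<^sup>+\<omega>. ennreal (2 * Bbound (Suc (card I)) t) \<partial>M)"
    proof (intro nn_integral_mono)
      fix \<omega> assume "\<omega> \<in> space M"
      then show "ennreal (F (t - Y \<omega>)) + ennreal (F (t + Y \<omega>)) \<le> ennreal (2 * Bbound (Suc (card I)) t)"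
        using pw[of \<omega>] unfolding F_def by (metis ennreal_leI ennreal_plus measure_nonneg)
    qed
    also have "\<dots> = ennreal (2 * Bbound (Suc (card I)) t)"
      by (simp add: emeasure_space_1)
    finally have "prob ?A + prob ?A \<le> 2 * Bbound (Suc (card I)) t"
      using Bbound_nonneg by (subst (asm) ennreal_le_iff) auto
    then show ?thesis by simp
  qed
  show ?case
    using SYM BND insert.hyps by (simp add: sumeq)
qed

end



theorem mainTheorem20:
  fixes A :: "real^'n^'m" and b0 :: "real^'m"
    and N :: "'m \<Rightarrow> nat" and \<Delta>b :: "'m \<Rightarrow> nat \<Rightarrow> real"
    and w :: "real^'m" and x :: "real^'n" and y s :: "real^'m"
    and M :: "'a measure" and z :: "nat \<Rightarrow> 'a \<Rightarrow> real" and i :: 'm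
  assumes rankA: "rank A = CARD('n)"
    and nm: "CARD('n) \<le> CARD('m)"
    and bnd: "bounded (polytope A b0)"
    and intr: "interior (polytope A b0) \<noteq> {}"
    and db_nonneg: "\<And>j l. l \<in> {1..N j} \<Longrightarrow> \<Delta>b j l \<ge> 0"
    and db_nonzero: "\<And>j. \<exists>l\<in>{1..N j}. \<Delta>b j l \<noteq> 0"
    and w_pos: "\<And>j. w $ j > 0"
    and w_sum: "(\<Sum>j\<in>UNIV. w $ j) = 1"
    and center: "is_weighted_center A b0 w x y s"
    and P: "prob_space M"
    and z_rv: "\<And>l. l \<in> {1..N i} \<Longrightarrow> z l \<in> borel_measurable M"
    and z_indep: "prob_space.indep_vars M (\<lambda>_. borel) z {1..N i}"
    and z_sym: "\<And>l. l \<in> {1..N i} \<Longrightarrow> distr M borel (z l) = distr M borel (\<lambda>\<omega>. - z l \<omega>)"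
    and z_range: "\<And>l \<omega>. l \<in> {1..N i} \<Longrightarrow> \<omega> \<in> space M \<Longrightarrow> z l \<omega> \<in> {-1..1}"
  shows "measure M {\<omega> \<in> space M. (A $ i) \<bullet> x > b0 $ i + (\<Sum>l\<in>{1..N i}. \<Delta>b i l * z l \<omega>)}
           \<le> Bbound (N i)
               ((w $ i / (y $ i * (\<Sum>l\<in>{1..N i}. \<bar>\<Delta>b i l\<bar>)))
                 * ((\<Sum>l\<in>{1..N i}. \<bar>\<Delta>b i l\<bar>) / Max (\<Delta>b i ` {1..N i})))"

proof -
  interpret prob_space M by (rule P)
  define I where "I = {1..N i}"
  define D where "D = (\<Sum>l\<in>I. \<bar>\<Delta>b i l\<bar>)"
  define m where "m = Max (\<Delta>b i ` I)"
  have finI: "finite I" unfolding I_def by simp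
  obtain l0 where l0: "l0 \<in> I" "\<Delta>b i l0 \<noteq> 0" using db_nonzero[of i] unfolding I_def by blast
  have l0pos: "\<Delta>b i l0 > 0" using db_nonneg[of l0 i] l0 unfolding I_def by force
  have Ine: "I \<noteq> {}" using l0 by blast
  have le_m: "\<Delta>b i l \<le> m" if "l \<in> I" for l unfolding m_def using finI that by (intro Max_ge) auto
  have mpos: "m > 0" using le_m[OF l0(1)] l0pos by linarith
  have Dpos: "D > 0"
  proof -
    have "\<bar>\<Delta>b i l0\<bar> \<le> D" unfolding D_def using finI l0(1)
      by (intro member_le_sum) auto
    then show ?thesis using l0pos by linarith
  qed
  have spos: "s $ i > 0" and sy: "s $ i * y $ i = w $ i" and Axs: "A *v x + s = b0"
    using center unfolding is_weighted_center_def by auto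
  have ypos: "y $ i \<noteq> 0" using sy w_pos[of i] by auto
  have yeq: "y $ i = w $ i / s $ i" using sy spos by (simp add: field_simps)
  define t where "t = s $ i / m"
  have tpos: "t > 0" unfolding t_def using spos mpos by simp
  have arg: "(w $ i / (y $ i * D)) * (D / m) = t"
    unfolding t_def yeq using Dpos mpos spos w_pos[of i] by (simp add: field_simps)
  have ax: "(A $ i) \<bullet> x = b0 $ i - s $ i"
  proof -
    have "(A *v x) $ i + s $ i = b0 $ i" using Axs by (metis vector_add_component)
    then show ?thesis by (simp add: matrix_vector_mul_component)
  qed
  define c where "c = (\<lambda>l. \<Delta>b i l / m)"
  define X where "X = (\<lambda>l \<omega>. - c l * z l \<omega>)"
  have cb: "0 \<le> c l" "c l \<le> 1" if "l \<in> I" for l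
    unfolding c_def using le_m[OF that] db_nonneg[of l i] that mpos unfolding I_def
    by (auto simp: field_simps)
  have indX: "indep_vars (\<lambda>_. borel) X I"
    unfolding X_def I_def by (rule indep_vars_compose2[OF z_indep]) auto
  have symX: "distr M borel (X l) = distr M borel (\<lambda>\<omega>. - X l \<omega>)" if l: "l \<in> I" for l
  proof -
    have zm: "z l \<in> borel_measurable M" using z_rv l unfolding I_def by auto
    have "distr M borel (X l) = distr (distr M borel (z l)) borel (\<lambda>v. - c l * v)"
      unfolding X_def using zm by (subst distr_distr) (auto simp: comp_def)
    also have "\<dots> = distr (distr M borel (\<lambda>\<omega>. - z l \<omega>)) borel (\<lambda>v. - c l * v)"
      using z_sym l unfolding I_def by simp
    also have "\<dots> = distr M borel (\<lambda>\<omega>. - X l \<omega>)"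
      unfolding X_def using zm by (subst distr_distr) (auto simp: comp_def)
    finally show ?thesis .
  qed
  have bdX: "\<bar>X l \<omega>\<bar> \<le> 1" if "l \<in> I" "\<omega> \<in> space M" for l \<omega>
  proof -
    have "\<bar>z l \<omega>\<bar> \<le> 1" using z_range that unfolding I_def by fastforce
    then have "\<bar>c l\<bar> * \<bar>z l \<omega>\<bar> \<le> 1 * 1" using cb[OF that(1)]
      by (intro mult_mono) auto
    then show ?thesis unfolding X_def by (simp add: abs_mult)
  qed
  have main: "prob {\<omega>\<in>space M. t \<le> (\<Sum>l\<in>I. X l \<omega>)} \<le> Bbound (card I) t"
    using sym_tail[OF finI indX symX bdX] tpos by blast
  have sumX: "(\<Sum>l\<in>I. X l \<omega>) = - (\<Sum>l\<in>I. \<Delta>b i l * z l \<omega>) / m" for \<omega>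
    unfolding X_def c_def by (simp add: sum_divide_distrib[symmetric] sum_negf)
  have rvX: "(\<lambda>\<omega>. \<Sum>l\<in>I. X l \<omega>) \<in> borel_measurable M"
    using z_rv unfolding X_def I_def by (intro borel_measurable_sum) auto
  have sub: "{\<omega> \<in> space M. (A $ i) \<bullet> x > b0 $ i + (\<Sum>l\<in>I. \<Delta>b i l * z l \<omega>)}
      \<subseteq> {\<omega>\<in>space M. t \<le> (\<Sum>l\<in>I. X l \<omega>)}"
  proof safe
    fix \<omega> assume "\<omega> \<in> space M" "(A $ i) \<bullet> x > b0 $ i + (\<Sum>l\<in>I. \<Delta>b i l * z l \<omega>)"
    then have "s $ i < - (\<Sum>l\<in>I. \<Delta>b i l * z l \<omega>)" using ax by simp
    then have "s $ i / m \<le> (- (\<Sum>l\<in>I. \<Delta>b i l * z l \<omega>)) / m" using mpos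
      by (intro divide_right_mono) auto
    then show "t \<le> (\<Sum>l\<in>I. X l \<omega>)" unfolding sumX t_def .
  qed
  have "measure M {\<omega> \<in> space M. (A $ i) \<bullet> x > b0 $ i + (\<Sum>l\<in>I. \<Delta>b i l * z l \<omega>)}
      \<le> prob {\<omega>\<in>space M. t \<le> (\<Sum>l\<in>I. X l \<omega>)}"
  proof (rule finite_measure_mono[OF sub])
    have "{\<omega>\<in>space M. t \<le> (\<Sum>l\<in>I. X l \<omega>)} = (\<lambda>\<omega>. \<Sum>l\<in>I. X l \<omega>) -` {t..} \<inter> space M" by auto
    also have "\<dots> \<in> events" by (rule measurable_sets[OF rvX]) simp
    finally show "{\<omega>\<in>space M. t \<le> (\<Sum>l\<in>I. X l \<omega>)} \<in> events" .
  qed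
  also have "\<dots> \<le> Bbound (N i) t" using main unfolding I_def by simp
  finally show ?thesis unfolding arg[unfolded D_def m_def I_def] I_def .
qed

end
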